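(* Let $(X,\mathrm{d})$ be a compact metric space. The metrics $\mathrm{d}_L$ and $\mathrm{d}_W$ define the same topology on the set $\mathrm{Lip}(X,\mathrm{d})$ of bi-Lipschitz homeomorphisms of $X$.
   Context: $\mathrm{d}_{C^0}(f,g)=\max_{x}\mathrm{d}(f(x),g(x))+\max_x\mathrm{d}(f^{-1}(x),g^{-1}(x))$. $\mathrm{d}'_W(f,g)=\sup_{x\ne y}\frac{|\mathrm{d}(f(x),f(y))-\mathrm{d}(g(x),g(y))|}{\mathrm{d}(x,y)}$ and $\mathrm{d}_W(f,g)=\mathrm{d}_{C^0}(f,g)+\mathrm{d}'_W(f,g)+\mathrm{d}'_W(f^{-1},g^{-1})$. $\mathrm{d}'_L(f,g)=\sup_{x\ne y}\left|\log\frac{\mathrm{d}(f(x),f(y))}{\mathrm{d}(g(x),g(y))}\right|$ and $\mathrm{d}_L(f,g)=\mathrm{d}_{C^0}(f,g)+\mathrm{d}'_L(f,g)+\mathrm{d}'_L(f^{-1},g^{-1})$. *)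

theory Defs
  imports "HOL-Analysis.Analysis"
begin

text \<open>The compact metric space X is the (universe of the) type 'a :: metric_space,
  with the standing hypothesis compact UNIV.\<close>

text \<open>Lip(X,d): bi-Lipschitz homeomorphisms of X (bijections such that f and its inverse
  are Lipschitz; these are automatically homeomorphisms).\<close>
definition biLip :: "('a::metric_space \<Rightarrow> 'a) set" where
  "biLip = {f. bij f \<and> (\<exists>C. C-lipschitz_on UNIV f) \<and> (\<exists>C. C-lipschitz_on UNIV (inv f))}"

definition dC0 :: "('a::metric_space \<Rightarrow> 'a) \<Rightarrow> ('a \<Rightarrow> 'a) \<Rightarrow> real" where
  "dC0 f g = (SUP x. dist (f x) (g x)) + (SUP x. dist (inv f x) (inv g x))"

text \<open>Supremum over pairs x \<noteq> y; 0 is adjoined so that the supremum is 0 (rather than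
  unspecified) when X is a single point. All quantities are nonnegative, so this does not
  change the value otherwise.\<close>
definition dW' :: "('a::metric_space \<Rightarrow> 'a) \<Rightarrow> ('a \<Rightarrow> 'a) \<Rightarrow> real" where
  "dW' f g = Sup (insert 0 {\<bar>dist (f x) (f y) - dist (g x) (g y)\<bar> / dist x y | x y. x \<noteq> y})"

definition dW :: "('a::metric_space \<Rightarrow> 'a) \<Rightarrow> ('a \<Rightarrow> 'a) \<Rightarrow> real" where
  "dW f g = dC0 f g + dW' f g + dW' (inv f) (inv g)"

definition dL' :: "('a::metric_space \<Rightarrow> 'a) \<Rightarrow> ('a \<Rightarrow> 'a) \<Rightarrow> real" where
  "dL' f g = Sup (insert 0 {\<bar>ln (dist (f x) (f y) / dist (g x) (g y))\<bar> | x y. x \<noteq> y})"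

definition dL :: "('a::metric_space \<Rightarrow> 'a) \<Rightarrow> ('a \<Rightarrow> 'a) \<Rightarrow> real" where
  "dL f g = dC0 f g + dL' f g + dL' (inv f) (inv g)"

definition metric_open :: "'b set \<Rightarrow> ('b \<Rightarrow> 'b \<Rightarrow> real) \<Rightarrow> 'b set \<Rightarrow> bool" where
  "metric_open M d U \<longleftrightarrow> U \<subseteq> M \<and> (\<forall>x\<in>U. \<exists>e>0. \<forall>y\<in>M. d x y < e \<longrightarrow> y \<in> U)"

end

theory Submission
  imports Defs
begin

definition rb :: "real \<Rightarrow> ('a::metric_space \<Rightarrow> 'a) \<Rightarrow> bool" where
  "rb K f \<longleftrightarrow> K \<ge> 1 \<and> (\<forall>x y. dist (f x) (f y) \<le> K * dist x y \<and> dist x y \<le> K * dist (f x) (f y))"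

lemma biLip_rb:
  assumes "f \<in> biLip"
  shows "\<exists>K. rb K f \<and> rb K (inv f)"
proof -
  from assms obtain C1 C2 where b: "bij f" and l1: "C1-lipschitz_on UNIV f"
    and l2: "C2-lipschitz_on UNIV (inv f)" unfolding biLip_def by blast
  define K where "K = max 1 (max C1 C2)"
  have h1: "dist (f x) (f y) \<le> K * dist x y" for x y
  proof -
    have "dist (f x) (f y) \<le> C1 * dist x y" using lipschitz_onD[OF l1] by auto
    also have "\<dots> \<le> K * dist x y" unfolding K_def by (intro mult_right_mono) auto
    finally show ?thesis .
  qed
  have h2: "dist (inv f x) (inv f y) \<le> K * dist x y" for x y
  proof -
    have "dist (inv f x) (inv f y) \<le> C2 * dist x y" using lipschitz_onD[OF l2] by auto
    also have "\<dots> \<le> K * dist x y" unfolding K_def by (intro mult_right_mono) auto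
    finally show ?thesis .
  qed
  have h3: "dist x y \<le> K * dist (f x) (f y)" for x y
    using h2[of "f x" "f y"] b by (simp add: bij_is_inj)
  have h4: "dist x y \<le> K * dist (inv f x) (inv f y)" for x y
    using h1[of "inv f x" "inv f y"] b by (simp add: bij_is_surj surj_f_inv_f)
  have "K \<ge> 1" unfolding K_def by simp
  thus ?thesis unfolding rb_def using h1 h2 h3 h4 by blast
qed

lemma rb_pos: "rb K f \<Longrightarrow> x \<noteq> y \<Longrightarrow> dist (f x) (f y) > 0"
  unfolding rb_def
  by (metis dist_eq_0_iff mult_zero_right order_le_less zero_less_dist_iff linorder_not_le)

lemma P1:
  fixes A B D K t :: real
  assumes "D > 0" "A > 0" "B > 0" "A \<le> K * D" "\<bar>ln (A / B)\<bar> \<le> t"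
  shows "\<bar>A - B\<bar> / D \<le> K * (exp t - 1)"
proof -
  have a: "A / B \<le> exp t" using assms
    by (metis abs_le_D1 divide_pos_pos exp_le_cancel_iff exp_ln)
  have "ln (B / A) = - ln (A / B)" using assms by (simp add: ln_div)
  hence "B / A \<le> exp t" using assms
    by (metis abs_le_D2 divide_pos_pos exp_le_cancel_iff exp_ln)
  hence b: "B \<le> A * exp t" using assms by (simp add: divide_le_eq mult.commute)
  have a': "A \<le> B * exp t" using a assms by (simp add: divide_le_eq mult.commute)
  have t0: "t \<ge> 0" using assms(5) by linarith
  have e1: "exp t \<ge> 1" using t0 by simp
  have "A - B \<le> A * (exp t - 1)"
  proof -
    have "B \<ge> A / exp t" using a' by (simp add: divide_le_eq)
    moreover have "A - A / exp t \<le> A * (exp t - 1)"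
    proof -
      have "A * exp t - A \<le> A * (exp t - 1) * exp t"
      proof -
        have "A * (exp t - 1) \<le> A * (exp t - 1) * exp t"
          using mult_left_mono[of 1 "exp t" "A*(exp t -1)"] e1 assms by simp
        thus ?thesis by (simp add: algebra_simps)
      qed
      thus ?thesis by (simp add: field_simps)
    qed
    ultimately show ?thesis by linarith
  qed
  moreover have "B - A \<le> A * (exp t - 1)" using b by (simp add: algebra_simps)
  ultimately have "\<bar>A - B\<bar> \<le> A * (exp t - 1)" by linarith
  also have "\<dots> \<le> K * D * (exp t - 1)" using assms e1 by (intro mult_right_mono) auto
  finally show ?thesis using assms by (simp add: divide_le_eq mult_ac)
qed

lemma ln_diff_bound:
  fixes u v c :: real
  assumes "c > 0" "u \<ge> c" "v \<ge> c"
  shows "\<bar>ln u - ln v\<bar> \<le> \<bar>u - v\<bar> / c"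
proof -
  have "ln u - ln v = ln (u / v)" using assms by (simp add: ln_div)
  also have "\<dots> \<le> u / v - 1" using assms by (intro ln_le_minus_one) auto
  also have "\<dots> = (u - v) / v" using assms by (simp add: field_simps)
  also have "\<dots> \<le> \<bar>u - v\<bar> / c" using assms
    by (smt (verit) divide_nonneg_pos frac_le abs_ge_self abs_ge_zero divide_le_0_iff)
  finally have 1: "ln u - ln v \<le> \<bar>u - v\<bar> / c" .
  have "ln v - ln u = ln (v / u)" using assms by (simp add: ln_div)
  also have "\<dots> \<le> v / u - 1" using assms by (intro ln_le_minus_one) auto
  also have "\<dots> = (v - u) / u" using assms by (simp add: field_simps)
  also have "\<dots> \<le> \<bar>u - v\<bar> / c" using assms
    by (smt (verit) divide_nonneg_pos frac_le abs_ge_self abs_ge_zero divide_le_0_iff abs_minus_commute)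
  finally have 2: "ln v - ln u \<le> \<bar>u - v\<bar> / c" .
  show ?thesis using 1 2 by linarith
qed

lemma P2:
  fixes A B D K s :: real
  assumes "D > 0" "K \<ge> 1" "B > 0" "D \<le> K * A" "\<bar>A - B\<bar> / D \<le> s" "s \<le> 1 / (2 * K)"
  shows "\<bar>ln (A / B)\<bar> \<le> 2 * K * s"
proof -
  define u where "u = A / D"
  define v where "v = B / D"
  have Kp: "K > 0" using assms by simp
  have u: "u \<ge> 1 / K" using assms unfolding u_def by (simp add: field_simps)
  have uv: "\<bar>u - v\<bar> \<le> s" using assms unfolding u_def v_def by (simp add: diff_divide_distrib[symmetric])
  have "1 / K - 1 / (2 * K) = 1 / (2 * K)" by (simp add: field_simps)
  hence v: "v \<ge> 1 / (2 * K)" using u uv assms(6) by linarith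
  have u2: "u \<ge> 1 / (2 * K)" using u Kp by (smt (verit) divide_le_eq_1_pos divide_pos_pos frac_le)
  have c: "1 / (2 * K) > 0" using Kp by simp
  have "A / B = u / v" using assms unfolding u_def v_def by simp
  moreover have "u > 0" "v > 0" using u2 v c by linarith+
  ultimately have "ln (A / B) = ln u - ln v" by (simp add: ln_div)
  hence "\<bar>ln (A / B)\<bar> \<le> \<bar>u - v\<bar> / (1 / (2 * K))"
    using ln_diff_bound[OF c u2 v] by simp
  also have "\<dots> = 2 * K * \<bar>u - v\<bar>" by simp
  also have "\<dots> \<le> 2 * K * s" using uv Kp by simp
  finally show ?thesis .
qed


lemma rbD:
  assumes "rb K f"
  shows "K \<ge> 1" "dist (f x) (f y) \<le> K * dist x y" "dist x y \<le> K * dist (f x) (f y)"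
  using assms unfolding rb_def by auto

lemma bddW:
  assumes "rb Kf f" "rb Kg g"
  shows "bdd_above (insert 0 {\<bar>dist (f x) (f y) - dist (g x) (g y)\<bar> / dist x y | x y. x \<noteq> y})"
proof (rule bdd_aboveI[where M = "Kf + Kg"])
  fix r assume "r \<in> insert 0 {\<bar>dist (f x) (f y) - dist (g x) (g y)\<bar> / dist x y | x y. x \<noteq> y}"
  then consider "r = 0" | x y where "x \<noteq> y" "r = \<bar>dist (f x) (f y) - dist (g x) (g y)\<bar> / dist x y" by blast
  then show "r \<le> Kf + Kg"
  proof cases
    case 1 then show ?thesis using rbD(1)[OF assms(1)] rbD(1)[OF assms(2)] by simp
  next
    case 2
    have D: "dist x y > 0" using 2 by simp
    have "\<bar>dist (f x) (f y) - dist (g x) (g y)\<bar> \<le> dist (f x) (f y) + dist (g x) (g y)"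
      using zero_le_dist[of "f x" "f y"] zero_le_dist[of "g x" "g y"] by linarith
    also have "\<dots> \<le> (Kf + Kg) * dist x y" using rbD(2)[OF assms(1)] rbD(2)[OF assms(2)]
      by (simp add: distrib_right add_mono)
    finally show ?thesis using 2 D by (simp add: divide_le_eq)
  qed
qed

lemma bddL:
  assumes "rb Kf f" "rb Kg g"
  shows "bdd_above (insert 0 {\<bar>ln (dist (f x) (f y) / dist (g x) (g y))\<bar> | x y. x \<noteq> y})"
proof -
  define K where "K = max Kf Kg"
  have K1: "K \<ge> 1" using rbD(1)[OF assms(1)] unfolding K_def by simp
  show ?thesis
  proof (rule bdd_aboveI[where M = "2 * K * K"])
    fix r assume "r \<in> insert 0 {\<bar>ln (dist (f x) (f y) / dist (g x) (g y))\<bar> | x y. x \<noteq> y}"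
    then consider "r = 0" | x y where "x \<noteq> y" "r = \<bar>ln (dist (f x) (f y) / dist (g x) (g y))\<bar>" by blast
    then show "r \<le> 2 * K * K"
    proof cases
      case 1 then show ?thesis using K1 by simp
    next
      case 2
      define D where "D = dist x y"
      define u where "u = dist (f x) (f y) / D"
      define v where "v = dist (g x) (g y) / D"
      have D: "D > 0" using 2 D_def by simp
      have Kp: "K > 0" using K1 by simp
      have KfK: "Kf \<le> K" "Kg \<le> K" unfolding K_def by auto
      have a1: "dist (f x) (f y) \<le> K * D"
        using rbD(2)[OF assms(1), of x y] mult_right_mono[OF KfK(1), of D] D unfolding D_def by linarith
      have a2: "D \<le> K * dist (f x) (f y)"
        using rbD(3)[OF assms(1), of x y] mult_right_mono[OF KfK(1) zero_le_dist, of "f x" "f y"] unfolding D_def by linarith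
      have b1: "dist (g x) (g y) \<le> K * D"
        using rbD(2)[OF assms(2), of x y] mult_right_mono[OF KfK(2), of D] D unfolding D_def by linarith
      have b2: "D \<le> K * dist (g x) (g y)"
        using rbD(3)[OF assms(2), of x y] mult_right_mono[OF KfK(2) zero_le_dist, of "g x" "g y"] unfolding D_def by linarith
      have uu: "u \<le> K" "u \<ge> 1 / K"
        using a1 a2 D Kp unfolding u_def by (simp_all add: field_simps)
      have vv: "v \<le> K" "v \<ge> 1 / K"
        using b1 b2 D Kp unfolding v_def by (simp_all add: field_simps)
      have c: "1 / K > 0" using Kp by simp
      have "dist (f x) (f y) / dist (g x) (g y) = u / v" unfolding u_def v_def D_def using D D_def by simp
      moreover have "u > 0" "v > 0" using uu vv c by linarith+
      ultimately have "ln (dist (f x) (f y) / dist (g x) (g y)) = ln u - ln v" by (simp add: ln_div)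
      hence "r \<le> \<bar>u - v\<bar> / (1 / K)" using ln_diff_bound[OF c uu(2) vv(2)] 2 by simp
      also have "\<dots> = K * \<bar>u - v\<bar>" by simp
      also have "\<dots> \<le> K * (2 * K)" using Kp uu vv \<open>u > 0\<close> \<open>v > 0\<close> by (intro mult_left_mono) auto
      finally show ?thesis by simp
    qed
  qed
qed

lemma dW'_nonneg: "rb Kf f \<Longrightarrow> rb Kg g \<Longrightarrow> dW' f g \<ge> 0"
  unfolding dW'_def by (rule cSup_upper[OF _ bddW]) auto

lemma dL'_nonneg: "rb Kf f \<Longrightarrow> rb Kg g \<Longrightarrow> dL' f g \<ge> 0"
  unfolding dL'_def by (rule cSup_upper[OF _ bddL]) auto

lemma L3:
  assumes "rb Kf f" "rb Kg g"
  shows "dW' f g \<le> Kf * (exp (dL' f g) - 1)"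
  unfolding dW'_def
proof (rule cSup_least)
  fix r assume "r \<in> insert 0 {\<bar>dist (f x) (f y) - dist (g x) (g y)\<bar> / dist x y | x y. x \<noteq> y}"
  then consider "r = 0" | x y where "x \<noteq> y" "r = \<bar>dist (f x) (f y) - dist (g x) (g y)\<bar> / dist x y" by blast
  then show "r \<le> Kf * (exp (dL' f g) - 1)"
  proof cases
    case 1 then show ?thesis using rbD(1)[OF assms(1)] dL'_nonneg[OF assms] by simp
  next
    case 2
    have le: "\<bar>ln (dist (f x) (f y) / dist (g x) (g y))\<bar> \<le> dL' f g"
      unfolding dL'_def by (rule cSup_upper[OF _ bddL[OF assms]]) (use 2 in blast)
    show ?thesis unfolding 2
      by (rule P1[OF _ rb_pos[OF assms(1) 2(1)] rb_pos[OF assms(2) 2(1)] rbD(2)[OF assms(1)] le])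
         (use 2 in simp)
  qed
qed simp

lemma L4:
  assumes "rb Kf f" "rb Kg g" "dW' f g \<le> 1 / (2 * Kf)"
  shows "dL' f g \<le> 2 * Kf * dW' f g"
  unfolding dL'_def
proof (rule cSup_least)
  fix r assume "r \<in> insert 0 {\<bar>ln (dist (f x) (f y) / dist (g x) (g y))\<bar> | x y. x \<noteq> y}"
  then consider "r = 0" | x y where "x \<noteq> y" "r = \<bar>ln (dist (f x) (f y) / dist (g x) (g y))\<bar>" by blast
  then show "r \<le> 2 * Kf * dW' f g"
  proof cases
    case 1 then show ?thesis using rbD(1)[OF assms(1)] dW'_nonneg[OF assms(1,2)] by simp
  next
    case 2
    have le: "\<bar>dist (f x) (f y) - dist (g x) (g y)\<bar> / dist x y \<le> dW' f g"
      unfolding dW'_def by (rule cSup_upper[OF _ bddW[OF assms(1,2)]]) (use 2 in blast)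
    show ?thesis unfolding 2
      by (rule P2[OF _ rbD(1)[OF assms(1)] rb_pos[OF assms(2) 2(1)] rbD(3)[OF assms(1)] le assms(3)])
         (use 2 in simp)
  qed
qed simp

lemma dC0_nonneg:
  assumes "compact (UNIV :: 'a::metric_space set)"
  shows "dC0 (f::'a \<Rightarrow> 'a) g \<ge> 0"
proof -
  have "bounded (UNIV :: 'a set)" using assms by (rule compact_imp_bounded)
  then obtain a e where ae: "\<And>y::'a. dist a y \<le> e" unfolding bounded_def by blast
  have db: "dist (p::'a) q \<le> 2 * e" for p q
    using dist_triangle2[of p q a] ae[of p] ae[of q] by (simp add: dist_commute)
  have 1: "(SUP x. dist (f x) (g x)) \<ge> 0"
  proof -
    have "dist (f undefined) (g undefined) \<le> (SUP x. dist (f x) (g x))"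
      by (rule cSUP_upper) (auto intro!: bdd_aboveI[where M = "2 * e"] simp: db)
    thus ?thesis using zero_le_dist order_trans by blast
  qed
  have 2: "(SUP x. dist (inv f x) (inv g x)) \<ge> 0"
  proof -
    have "dist (inv f undefined) (inv g undefined) \<le> (SUP x. dist (inv f x) (inv g x))"
      by (rule cSUP_upper) (auto intro!: bdd_aboveI[where M = "2 * e"] simp: db)
    thus ?thesis using zero_le_dist order_trans by blast
  qed
  show ?thesis unfolding dC0_def using 1 2 by simp
qed

lemma transfer_open:
  assumes "\<forall>f\<in>M. \<forall>e>0. \<exists>\<delta>>0. \<forall>g\<in>M. d2 f g < \<delta> \<longrightarrow> d1 f g < e"
    and "metric_open M d1 U"
  shows "metric_open M d2 U"
proof -
  have sub: "U \<subseteq> M" using assms(2) unfolding metric_open_def by blast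
  have "\<exists>e>0. \<forall>y\<in>M. d2 f y < e \<longrightarrow> y \<in> U" if f: "f \<in> U" for f
  proof -
    obtain e where e: "e > 0" "\<forall>y\<in>M. d1 f y < e \<longrightarrow> y \<in> U"
      using assms(2) f unfolding metric_open_def by blast
    have "f \<in> M" using f sub by blast
    then obtain \<delta> where "\<delta> > 0" "\<forall>g\<in>M. d2 f g < \<delta> \<longrightarrow> d1 f g < e" using assms(1) e by blast
    thus ?thesis using e by blast
  qed
  thus ?thesis using sub unfolding metric_open_def by blast
qed

theorem mainTheorem5:
  assumes "compact (UNIV :: 'a::metric_space set)"
  shows "\<forall>U :: ('a \<Rightarrow> 'a) set. metric_open biLip dL U \<longleftrightarrow> metric_open biLip dW U"
proof -
  have A: "\<forall>f\<in>(biLip :: ('a \<Rightarrow> 'a) set). \<forall>e>0. \<exists>\<delta>>0. \<forall>g\<in>biLip. dW f g < \<delta> \<longrightarrow> dL f g < e"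
  proof (intro ballI allI impI)
    fix f :: "'a \<Rightarrow> 'a" and e :: real assume f: "f \<in> biLip" and e: "e > 0"
    obtain K where K: "rb K f" "rb K (inv f)" using biLip_rb[OF f] by blast
    have K1: "K \<ge> 1" using rbD(1)[OF K(1)] .
    define \<delta> where "\<delta> = min (1 / (2 * K)) (e / (2 * K))"
    have dp: "\<delta> > 0" unfolding \<delta>_def using K1 e by simp
    show "\<exists>\<delta>>0. \<forall>g\<in>biLip. dW f g < \<delta> \<longrightarrow> dL f g < e"
    proof (intro exI[of _ \<delta>] conjI ballI impI dp)
      fix g :: "'a \<Rightarrow> 'a" assume g: "g \<in> biLip" and lt: "dW f g < \<delta>"
      obtain Kg where Kg: "rb Kg g" "rb Kg (inv g)" using biLip_rb[OF g] by blast
      have n0: "dC0 f g \<ge> 0" by (rule dC0_nonneg[OF assms])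
      have n1: "dW' f g \<ge> 0" by (rule dW'_nonneg[OF K(1) Kg(1)])
      have n2: "dW' (inv f) (inv g) \<ge> 0" by (rule dW'_nonneg[OF K(2) Kg(2)])
      have s1: "dW' f g \<le> 1 / (2 * K)" using lt n0 n2 unfolding dW_def \<delta>_def by linarith
      have s2: "dW' (inv f) (inv g) \<le> 1 / (2 * K)" using lt n0 n1 unfolding dW_def \<delta>_def by linarith
      have l1: "dL' f g \<le> 2 * K * dW' f g" by (rule L4[OF K(1) Kg(1) s1])
      have l2: "dL' (inv f) (inv g) \<le> 2 * K * dW' (inv f) (inv g)" by (rule L4[OF K(2) Kg(2) s2])
      have "dC0 f g \<le> 2 * K * dC0 f g" using n0 K1 by (simp add: mult_le_cancel_right1)
      hence "dL f g \<le> 2 * K * dW f g" using l1 l2 unfolding dL_def dW_def by (simp add: algebra_simps)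
      also have "\<dots> < 2 * K * \<delta>" using lt K1 by simp
      also have "\<dots> \<le> e" unfolding \<delta>_def using K1 by (simp add: min_def field_simps)
      finally show "dL f g < e" .
    qed
  qed
  have B: "\<forall>f\<in>(biLip :: ('a \<Rightarrow> 'a) set). \<forall>e>0. \<exists>\<delta>>0. \<forall>g\<in>biLip. dL f g < \<delta> \<longrightarrow> dW f g < e"
  proof (intro ballI allI impI)
    fix f :: "'a \<Rightarrow> 'a" and e :: real assume f: "f \<in> biLip" and e: "e > 0"
    obtain K where K: "rb K f" "rb K (inv f)" using biLip_rb[OF f] by blast
    have K1: "K \<ge> 1" using rbD(1)[OF K(1)] .
    define \<delta> where "\<delta> = min (1 / 2) (e / (2 * K))"
    have dp: "\<delta> > 0" unfolding \<delta>_def using K1 e by simp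
    show "\<exists>\<delta>>0. \<forall>g\<in>biLip. dL f g < \<delta> \<longrightarrow> dW f g < e"
    proof (intro exI[of _ \<delta>] conjI ballI impI dp)
      fix g :: "'a \<Rightarrow> 'a" assume g: "g \<in> biLip" and lt: "dL f g < \<delta>"
      obtain Kg where Kg: "rb Kg g" "rb Kg (inv g)" using biLip_rb[OF g] by blast
      have n0: "dC0 f g \<ge> 0" by (rule dC0_nonneg[OF assms])
      have n1: "dL' f g \<ge> 0" by (rule dL'_nonneg[OF K(1) Kg(1)])
      have n2: "dL' (inv f) (inv g) \<ge> 0" by (rule dL'_nonneg[OF K(2) Kg(2)])
      have s1: "dL' f g \<le> 1 / 2" using lt n0 n2 unfolding dL_def \<delta>_def by linarith
      have s2: "dL' (inv f) (inv g) \<le> 1 / 2" using lt n0 n1 unfolding dL_def \<delta>_def by linarith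
      have e1: "exp (dL' f g) - 1 \<le> 2 * dL' f g" using real_exp_bound_lemma[OF n1 s1] by simp
      have e2: "exp (dL' (inv f) (inv g)) - 1 \<le> 2 * dL' (inv f) (inv g)"
        using real_exp_bound_lemma[OF n2 s2] by simp
      have l1: "dW' f g \<le> 2 * K * dL' f g"
      proof -
        have "K * (exp (dL' f g) - 1) \<le> K * (2 * dL' f g)" using K1 by (intro mult_left_mono[OF e1]) simp
        thus ?thesis using L3[OF K(1) Kg(1)] by simp
      qed
      have l2: "dW' (inv f) (inv g) \<le> 2 * K * dL' (inv f) (inv g)"
      proof -
        have "K * (exp (dL' (inv f) (inv g)) - 1) \<le> K * (2 * dL' (inv f) (inv g))" using K1 by (intro mult_left_mono[OF e2]) simp
        thus ?thesis using L3[OF K(2) Kg(2)] by simp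
      qed
      have "dC0 f g \<le> 2 * K * dC0 f g" using n0 K1 by (simp add: mult_le_cancel_right1)
      hence "dW f g \<le> 2 * K * dL f g" using l1 l2 unfolding dL_def dW_def by (simp add: algebra_simps)
      also have "\<dots> < 2 * K * \<delta>" using lt K1 by simp
      also have "\<dots> \<le> e" unfolding \<delta>_def using K1 by (simp add: min_def field_simps)
      finally show "dW f g < e" .
    qed
  qed
  show ?thesis using transfer_open[OF A] transfer_open[OF B] by blast
qed

end
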